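(* For the game ${\rm ab}$: - $\lim_{n\to\infty}P^{\rm ab}_n(p)=0$ if $p<1/64$; - $\lim_{n\to\infty}P^{\rm ab}_n(p)=1$ if $p>15/16$.
   Context: Fix $n\geq1$. Alice and Bob alternately make moves, Alice first, each making $n$ moves; every move is a choice from $\{1,2\}$. The outcome of the game ${\rm ab}_n(p)$ is the pair $(\#\{k:a_k=1\},\#\{k:b_k=1\})$, where $a_1,\dots,a_n$ are Alice's moves and $b_1,\dots,b_n$ are Bob's moves. To each possible outcome a winner is assigned independently: Bob with probability $p$, Alice with probability $1-p$. The players know the assignment and all previous moves. $P^{\rm ab}_n(p)$ is the probability that Bob has a winning strategy, i.e. a rule choosing his moves as a function of previous moves that guarantees a win for him whatever Alice plays. *)

theory Defs
  imports Complex_Main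
begin

text \<open>Moves are naturals in {1,2}. Alice's moves are a sequence a :: nat => nat
  (a k is her (k+1)-th move, only k < n matters). Bob's strategy maps the list of
  all previous moves (a_1, b_1, ..., a_k) to his move b_k.\<close>

type_synonym bob_strategy = "nat list \<Rightarrow> nat"

fun hist :: "(nat \<Rightarrow> nat) \<Rightarrow> bob_strategy \<Rightarrow> nat \<Rightarrow> nat list" where
  "hist a \<sigma> 0 = []"
| "hist a \<sigma> (Suc k) = hist a \<sigma> k @ [a k, \<sigma> (hist a \<sigma> k @ [a k])]"

definition bob_move :: "(nat \<Rightarrow> nat) \<Rightarrow> bob_strategy \<Rightarrow> nat \<Rightarrow> nat" where
  "bob_move a \<sigma> k = \<sigma> (hist a \<sigma> k @ [a k])"

definition ab_outcome :: "nat \<Rightarrow> (nat \<Rightarrow> nat) \<Rightarrow> bob_strategy \<Rightarrow> nat \<times> nat" where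
  "ab_outcome n a \<sigma> = (card {k. k < n \<and> a k = 1}, card {k. k < n \<and> bob_move a \<sigma> k = 1})"

definition outcomes :: "nat \<Rightarrow> (nat \<times> nat) set" where
  "outcomes n = {0..n} \<times> {0..n}"

text \<open>S is the set of outcomes assigned to Bob. Bob has a winning strategy iff
  some legal strategy wins against every legal sequence of Alice's moves.\<close>
definition bob_wins :: "nat \<Rightarrow> (nat \<times> nat) set \<Rightarrow> bool" where
  "bob_wins n S \<longleftrightarrow>
     (\<exists>\<sigma>::bob_strategy. (\<forall>h. \<sigma> h \<in> {1,2}) \<and>
        (\<forall>a. (\<forall>k<n. a k \<in> {1,2}) \<longrightarrow> ab_outcome n a \<sigma> \<in> S))"

text \<open>Each outcome is independently Bob's with probability p: the probability that
  the set of Bob's outcomes equals S is p^|S| (1-p)^(|outcomes| - |S|).\<close>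
definition P_ab :: "nat \<Rightarrow> real \<Rightarrow> real" where
  "P_ab n p = (\<Sum>S\<in>Pow (outcomes n).
      (if bob_wins n S then p ^ card S * (1 - p) ^ (card (outcomes n) - card S) else 0))"

end

theory Submission
  imports Defs
begin


definition wt :: "real \<Rightarrow> 'a set \<Rightarrow> 'a set \<Rightarrow> real" where
  "wt p U S = p ^ card S * (1 - p) ^ (card U - card S)"

definition mu :: "real \<Rightarrow> 'a set \<Rightarrow> ('a set \<Rightarrow> bool) \<Rightarrow> real" where
  "mu p U E = (\<Sum>S\<in>Pow U. if E S then wt p U S else 0)"

definition loc :: "'a set \<Rightarrow> ('a set \<Rightarrow> bool) \<Rightarrow> bool" where
  "loc A E \<longleftrightarrow> (\<forall>S. E S = E (S \<inter> A))"

lemma wt_split: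
  assumes "finite U" "A \<subseteq> U" "T \<subseteq> A" "V \<subseteq> U - A"
  shows "wt p U (T \<union> V) = wt p A T * wt p (U - A) V"
proof -
  have fA: "finite A" using assms finite_subset by blast
  have fT: "finite T" "finite V" using assms fA finite_subset by blast+
  have c1: "card (T \<union> V) = card T + card V"
    using assms fT by (intro card_Un_disjoint) auto
  have c2: "card U = card A + card (U - A)"
    using assms fA by (metis card_Diff_subset card_mono le_add_diff_inverse)
  have c3: "card T \<le> card A" "card V \<le> card (U - A)"
    using assms fA by (auto intro: card_mono)
  have "card U - card (T \<union> V) = (card A - card T) + (card (U - A) - card V)"
    using c1 c2 c3 by simp
  then show ?thesis unfolding wt_def c1 by (simp add: power_add algebra_simps)
qed

lemma split_sum:
  assumes "finite U" "A \<subseteq> U"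
  shows "(\<Sum>S\<in>Pow U. f (S \<inter> A) * g (S - A) * wt p U S)
       = (\<Sum>T\<in>Pow A. f T * wt p A T) * (\<Sum>V\<in>Pow (U - A). g V * wt p (U - A) V)"
proof -
  have bij: "bij_betw (\<lambda>(T, V). T \<union> V) (Pow A \<times> Pow (U - A)) (Pow U)"
    unfolding bij_betw_def
  proof
    show "inj_on (\<lambda>(T, V). T \<union> V) (Pow A \<times> Pow (U - A))"
    proof (rule inj_onI)
      fix x y assume x: "x \<in> Pow A \<times> Pow (U - A)" and y: "y \<in> Pow A \<times> Pow (U - A)"
        and e: "(\<lambda>(T, V). T \<union> V) x = (\<lambda>(T, V). T \<union> V) y"
      obtain T V where tv: "x = (T, V)" "T \<subseteq> A" "V \<subseteq> U - A" using x by auto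
      obtain T' V' where tv': "y = (T', V')" "T' \<subseteq> A" "V' \<subseteq> U - A" using y by auto
      have e': "T \<union> V = T' \<union> V'" using e tv tv' by simp
      have "T = (T \<union> V) \<inter> A" "T' = (T' \<union> V') \<inter> A" using tv tv' by auto
      then have "T = T'" using e' by simp
      have "V = (T \<union> V) - A" "V' = (T' \<union> V') - A" using tv tv' by auto
      then have "V = V'" using e' by simp
      show "x = y" using tv tv' \<open>T = T'\<close> \<open>V = V'\<close> by simp
    qed
    show "(\<lambda>(T, V). T \<union> V) ` (Pow A \<times> Pow (U - A)) = Pow U"
    proof
      show "(\<lambda>(T, V). T \<union> V) ` (Pow A \<times> Pow (U - A)) \<subseteq> Pow U" using assms by fastforce
      show "Pow U \<subseteq> (\<lambda>(T, V). T \<union> V) ` (Pow A \<times> Pow (U - A))"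
      proof
        fix S assume "S \<in> Pow U"
        then have "S = (\<lambda>(T, V). T \<union> V) (S \<inter> A, S - A)" "(S \<inter> A, S - A) \<in> Pow A \<times> Pow (U - A)"
          by auto
        then show "S \<in> (\<lambda>(T, V). T \<union> V) ` (Pow A \<times> Pow (U - A))" by blast
      qed
    qed
  qed
  have "(\<Sum>S\<in>Pow U. f (S \<inter> A) * g (S - A) * wt p U S)
      = (\<Sum>x\<in>Pow A \<times> Pow (U - A). (\<lambda>S. f (S \<inter> A) * g (S - A) * wt p U S) ((\<lambda>(T, V). T \<union> V) x))"
    by (rule sum.reindex_bij_betw[OF bij, of "\<lambda>S. f (S \<inter> A) * g (S - A) * wt p U S", symmetric])
  also have "\<dots> = (\<Sum>x\<in>Pow A \<times> Pow (U - A). (case x of (T, V) \<Rightarrow> (f T * wt p A T) * (g V * wt p (U - A) V)))"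
  proof (rule sum.cong, simp)
    fix x assume "x \<in> Pow A \<times> Pow (U - A)"
    then obtain T V where x: "x = (T, V)" "T \<subseteq> A" "V \<subseteq> U - A" by auto
    then have "(T \<union> V) \<inter> A = T" "(T \<union> V) - A = V" by auto
    then show "(\<lambda>S. f (S \<inter> A) * g (S - A) * wt p U S) ((\<lambda>(T, V). T \<union> V) x)
       = (case x of (T, V) \<Rightarrow> (f T * wt p A T) * (g V * wt p (U - A) V))"
      using x wt_split[OF assms x(2,3), of p] by simp
  qed
  also have "\<dots> = (\<Sum>T\<in>Pow A. f T * wt p A T) * (\<Sum>V\<in>Pow (U - A). g V * wt p (U - A) V)"
    by (simp add: sum_product sum.cartesian_product)
  finally show ?thesis .
qed

lemma mu_total: "finite U \<Longrightarrow> mu p U (\<lambda>_. True) = 1"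
proof (induction U rule: finite_induct)
  case empty
  then show ?case by (simp add: mu_def wt_def)
next
  case (insert c V)
  have s: "{c} \<subseteq> insert c V" by auto
  have "mu p (insert c V) (\<lambda>_. True) = (\<Sum>S\<in>Pow (insert c V). (\<lambda>_. 1) (S \<inter> {c}) * (\<lambda>_. 1) (S - {c}) * wt p (insert c V) S)"
    by (simp add: mu_def)
  also have "\<dots> = (\<Sum>T\<in>Pow {c}. 1 * wt p {c} T) * (\<Sum>V'\<in>Pow (insert c V - {c}). 1 * wt p (insert c V - {c}) V')"
    by (rule split_sum) (use insert in auto)
  also have "insert c V - {c} = V" using insert by auto
  also have "(\<Sum>T\<in>Pow {c}. 1 * wt p {c} T) = 1"
    by (simp add: Pow_singleton_iff wt_def Pow_insert)
  also have "(\<Sum>V'\<in>Pow V. 1 * wt p V V') = 1" using insert by (simp add: mu_def)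
  finally show ?case by simp
qed

lemma wt_nonneg: "0 \<le> p \<Longrightarrow> p \<le> 1 \<Longrightarrow> 0 \<le> wt p U S"
  unfolding wt_def by simp

lemma mu_nonneg: "0 \<le> p \<Longrightarrow> p \<le> 1 \<Longrightarrow> 0 \<le> mu p U E"
  unfolding mu_def by (intro sum_nonneg) (simp add: wt_nonneg)

lemma mu_mono:
  assumes "0 \<le> p" "p \<le> 1" "\<And>S. S \<subseteq> U \<Longrightarrow> E S \<Longrightarrow> F S"
  shows "mu p U E \<le> mu p U F"
  unfolding mu_def by (intro sum_mono) (use assms wt_nonneg in auto)

lemma mu_compl:
  assumes "finite U"
  shows "mu p U (\<lambda>S. \<not> E S) = 1 - mu p U E"
proof -
  have "mu p U (\<lambda>S. \<not> E S) + mu p U E = mu p U (\<lambda>_. True)"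
    unfolding mu_def by (simp add: sum.distrib[symmetric] if_distrib) (rule sum.cong, auto)
  then show ?thesis using mu_total[OF assms] by simp
qed

lemma mu_union:
  assumes "0 \<le> p" "p \<le> 1" "finite I"
  shows "mu p U (\<lambda>S. \<exists>i\<in>I. E i S) \<le> (\<Sum>i\<in>I. mu p U (E i))"
proof -
  have "mu p U (\<lambda>S. \<exists>i\<in>I. E i S) \<le> (\<Sum>S\<in>Pow U. \<Sum>i\<in>I. if E i S then wt p U S else 0)"
    unfolding mu_def
  proof (rule sum_mono)
    fix S
    show "(if \<exists>i\<in>I. E i S then wt p U S else 0) \<le> (\<Sum>i\<in>I. if E i S then wt p U S else 0)"
    proof (cases "\<exists>i\<in>I. E i S")
      case True
      then obtain i where i: "i \<in> I" "E i S" by blast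
      have "(if E i S then wt p U S else 0) \<le> (\<Sum>i\<in>I. if E i S then wt p U S else 0)"
        by (rule member_le_sum) (use i assms wt_nonneg in auto)
      then show ?thesis using True i by simp
    next
      case False
      then show ?thesis by (simp add: sum_nonneg)
    qed
  qed
  also have "\<dots> = (\<Sum>i\<in>I. mu p U (E i))" unfolding mu_def by (rule sum.swap)
  finally show ?thesis .
qed

lemma mu_indep:
  assumes U: "finite U" and lE: "loc A E" and lF: "loc B F" and d: "A \<inter> B = {}"
  shows "mu p U (\<lambda>S. E S \<and> F S) = mu p U E * mu p U F"
proof -
  define A' where "A' = A \<inter> U"
  have A': "A' \<subseteq> U" unfolding A'_def by auto
  have eE: "E S = E (S \<inter> A')" if "S \<subseteq> U" for S
  proof -
    have "S \<inter> A' = S \<inter> A" using that unfolding A'_def by auto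
    then show ?thesis using lE unfolding loc_def by metis
  qed
  have eF: "F S = F (S - A')" if "S \<subseteq> U" for S
  proof -
    have "(S - A') \<inter> B = S \<inter> B" using that d unfolding A'_def by auto
    then show ?thesis using lF unfolding loc_def by metis
  qed
  define e where "e = (\<lambda>S. if E S then (1::real) else 0)"
  define f where "f = (\<lambda>S. if F S then (1::real) else 0)"
  have m: "mu p U G = (\<Sum>S\<in>Pow U. (if G S then 1 else 0) * wt p U S)" for G
    unfolding mu_def by (rule sum.cong) auto
  have "mu p U (\<lambda>S. E S \<and> F S) = (\<Sum>S\<in>Pow U. e (S \<inter> A') * f (S - A') * wt p U S)"
    unfolding m e_def f_def by (rule sum.cong) (use eE eF in auto)
  also have "\<dots> = (\<Sum>T\<in>Pow A'. e T * wt p A' T) * (\<Sum>V\<in>Pow (U - A'). f V * wt p (U - A') V)"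
    by (rule split_sum[OF U A'])
  finally have 1: "mu p U (\<lambda>S. E S \<and> F S) = (\<Sum>T\<in>Pow A'. e T * wt p A' T) * (\<Sum>V\<in>Pow (U - A'). f V * wt p (U - A') V)" .
  have "mu p U E = (\<Sum>S\<in>Pow U. e (S \<inter> A') * (\<lambda>_. 1) (S - A') * wt p U S)"
    unfolding m e_def by (rule sum.cong) (use eE in auto)
  also have "\<dots> = (\<Sum>T\<in>Pow A'. e T * wt p A' T) * (\<Sum>V\<in>Pow (U - A'). 1 * wt p (U - A') V)"
    by (rule split_sum[OF U A'])
  also have "(\<Sum>V\<in>Pow (U - A'). 1 * wt p (U - A') V) = 1"
    using mu_total[of "U - A'" p] U by (simp add: mu_def)
  finally have 2: "mu p U E = (\<Sum>T\<in>Pow A'. e T * wt p A' T)" by simp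
  have "mu p U F = (\<Sum>S\<in>Pow U. (\<lambda>_. 1) (S \<inter> A') * f (S - A') * wt p U S)"
    unfolding m f_def by (rule sum.cong) (use eF in auto)
  also have "\<dots> = (\<Sum>T\<in>Pow A'. 1 * wt p A' T) * (\<Sum>V\<in>Pow (U - A'). f V * wt p (U - A') V)"
    by (rule split_sum[OF U A'])
  also have "(\<Sum>T\<in>Pow A'. 1 * wt p A' T) = 1"
    using mu_total[of "A'" p] finite_subset[OF A' U] by (simp add: mu_def)
  finally have 3: "mu p U F = (\<Sum>V\<in>Pow (U - A'). f V * wt p (U - A') V)" by simp
  show ?thesis using 1 2 3 by simp
qed

lemma mu_cell_not:
  assumes U: "finite U" and c: "c \<in> U"
  shows "mu p U (\<lambda>S. c \<notin> S) = 1 - p"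
proof -
  have A: "{c} \<subseteq> U" using c by auto
  have "mu p U (\<lambda>S. c \<notin> S) = (\<Sum>S\<in>Pow U. (\<lambda>T. if c \<notin> T then 1 else 0) (S \<inter> {c}) * (\<lambda>_. 1) (S - {c}) * wt p U S)"
    unfolding mu_def by (rule sum.cong) auto
  also have "\<dots> = (\<Sum>T\<in>Pow {c}. (if c \<notin> T then 1 else 0) * wt p {c} T) * (\<Sum>V\<in>Pow (U - {c}). 1 * wt p (U - {c}) V)"
    by (rule split_sum[OF U A])
  also have "(\<Sum>V\<in>Pow (U - {c}). 1 * wt p (U - {c}) V) = 1"
    using mu_total[of "U - {c}" p] U by (simp add: mu_def)
  also have "(\<Sum>T\<in>Pow {c}. (if c \<notin> T then 1 else 0) * wt p {c} T) = 1 - p"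
    by (simp add: Pow_insert wt_def)
  finally show ?thesis by simp
qed

lemma mu_cell:
  assumes U: "finite U" and c: "c \<in> U"
  shows "mu p U (\<lambda>S. c \<in> S) = p"
  using mu_compl[OF U, of p "\<lambda>S. c \<in> S"] mu_cell_not[OF U c, of p] by simp



fun Win :: "nat \<Rightarrow> nat \<Rightarrow> nat \<Rightarrow> (nat \<times> nat) set \<Rightarrow> bool" where
  "Win 0 x y S = ((x, y) \<in> S)"
| "Win (Suc k) x y S = (\<forall>a\<in>{0::nat,1}. \<exists>b\<in>{0::nat,1}. Win k (x + a) (y + b) S)"

definition ind :: "nat \<Rightarrow> nat" where "ind v = (if v = 1 then 1 else 0)"

fun ca :: "nat list \<Rightarrow> nat" where
  "ca [] = 0" | "ca [u] = ind u" | "ca (u # v # r) = ind u + ca r"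

fun cb :: "nat list \<Rightarrow> nat" where
  "cb [] = 0" | "cb [u] = 0" | "cb (u # v # r) = ind v + cb r"

lemma ca_append: "even (length xs) \<Longrightarrow> ca (xs @ ys) = ca xs + ca ys"
  by (induction xs rule: ca.induct) auto

lemma cb_append: "even (length xs) \<Longrightarrow> cb (xs @ ys) = cb xs + cb ys"
  by (induction xs rule: cb.induct) auto

lemma length_hist: "length (hist a \<sigma> k) = 2 * k"
  by (induction k) auto

lemma card_lt_Suc: "card {i. i < Suc k \<and> P i} = card {i. i < k \<and> P i} + (if P k then 1 else 0)"
proof -
  have "{i. i < Suc k \<and> P i} = {i. i < k \<and> P i} \<union> (if P k then {k} else {})"
    by (auto simp: less_Suc_eq)
  then show ?thesis by (simp add: card_insert_if)
qed

definition cA where "cA a k = card {i. i < k \<and> a i = (1::nat)}"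
definition cB where "cB a \<sigma> k = card {i. i < k \<and> bob_move a \<sigma> i = 1}"

lemma cA_Suc: "cA a (Suc k) = cA a k + ind (a k)"
  unfolding cA_def ind_def by (simp add: card_lt_Suc)

lemma cB_Suc: "cB a \<sigma> (Suc k) = cB a \<sigma> k + ind (bob_move a \<sigma> k)"
  unfolding cB_def ind_def by (simp add: card_lt_Suc)

lemma ca_hist: "ca (hist a \<sigma> k) = cA a k"
proof (induction k)
  case 0 then show ?case by (simp add: cA_def)
next
  case (Suc k) then show ?case by (simp add: ca_append length_hist cA_Suc)
qed

lemma cb_hist: "cb (hist a \<sigma> k) = cB a \<sigma> k"
proof (induction k)
  case 0 then show ?case by (simp add: cB_def)
next
  case (Suc k) then show ?case by (simp add: cb_append length_hist cB_Suc bob_move_def)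
qed

lemma ca_hist1: "ca (hist a \<sigma> k @ [u]) = cA a k + ind u"
  by (simp add: ca_append length_hist ca_hist)

lemma cb_hist1: "cb (hist a \<sigma> k @ [u]) = cB a \<sigma> k"
  by (simp add: cb_append length_hist cb_hist)

lemma len_hist1: "length (hist a \<sigma> k @ [u]) div 2 = k"
  by (simp add: length_hist)

lemma outcome_eq: "ab_outcome n a \<sigma> = (cA a n, cB a \<sigma> n)"
  unfolding ab_outcome_def cA_def cB_def by simp

definition bstrat :: "nat \<Rightarrow> (nat \<times> nat) set \<Rightarrow> bob_strategy" where
  "bstrat n S h = (if Win (n - Suc (length h div 2)) (ca h) (cb h) S then 2 else 1)"

lemma win_imp_bob: "Win n 0 0 S \<Longrightarrow> bob_wins n S"
proof -
  assume W: "Win n 0 0 S"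
  let ?\<sigma> = "bstrat n S"
  have "ab_outcome n a ?\<sigma> \<in> S" if a: "\<forall>k<n. a k \<in> {1,2}" for a
  proof -
    have inv: "k \<le> n \<Longrightarrow> Win (n - k) (cA a k) (cB a ?\<sigma> k) S" for k
    proof (induction k)
      case 0
      then show ?case using W by (simp add: cA_def cB_def)
    next
      case (Suc k)
      have nk: "n - k = Suc (n - Suc k)" using Suc.prems by linarith
      have IH: "Win (Suc (n - Suc k)) (cA a k) (cB a ?\<sigma> k) S"
        using Suc.IH Suc.prems nk by simp
      have ak: "ind (a k) \<in> {0,1}" by (simp add: ind_def)
      have bm: "bob_move a ?\<sigma> k = (if Win (n - Suc k) (cA a (Suc k)) (cB a ?\<sigma> k) S then 2 else 1)"
        unfolding bob_move_def bstrat_def by (simp add: ca_hist1 cb_hist1 length_hist cA_Suc)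
      show ?case
      proof (cases "Win (n - Suc k) (cA a (Suc k)) (cB a ?\<sigma> k) S")
        case True
        have "bob_move a ?\<sigma> k = 2" by (simp only: bm True if_True)
        then have "cB a ?\<sigma> (Suc k) = cB a ?\<sigma> k" by (simp only: cB_Suc ind_def) simp
        then show ?thesis using True by simp
      next
        case False
        have "\<exists>b\<in>{0::nat,1}. Win (n - Suc k) (cA a k + ind (a k)) (cB a ?\<sigma> k + b) S"
          using IH ak unfolding Win.simps(2) by blast
        then obtain b where b: "b \<in> {0,1}" "Win (n - Suc k) (cA a k + ind (a k)) (cB a ?\<sigma> k + b) S"
          by blast
        have "b \<noteq> 0"
        proof
          assume "b = 0"
          then have "Win (n - Suc k) (cA a (Suc k)) (cB a ?\<sigma> k) S" using b(2) by (simp only: cA_Suc add_0_right)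
          then show False using False by contradiction
        qed
        then have "b = 1" using b(1) by blast
        have "bob_move a ?\<sigma> k = 1" using False by (simp only: bm if_False)
        then have "cB a ?\<sigma> (Suc k) = cB a ?\<sigma> k + 1" by (simp only: cB_Suc ind_def) simp
        then show ?thesis using b \<open>b = 1\<close> by (simp only: cA_Suc)
      qed
    qed
    show ?thesis using inv[of n] by (simp add: outcome_eq)
  qed
  moreover have "\<forall>h. ?\<sigma> h \<in> {1,2}" by (simp add: bstrat_def)
  ultimately show ?thesis unfolding bob_wins_def by blast
qed

definition ach :: "nat \<Rightarrow> (nat \<times> nat) set \<Rightarrow> nat list \<Rightarrow> nat" where
  "ach n S h = (if \<forall>\<beta>\<in>{0::nat,1}. \<not> Win (n - Suc (length h div 2)) (ca h) (cb h + \<beta>) S then 2 else 1)"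

fun ahist :: "nat \<Rightarrow> (nat \<times> nat) set \<Rightarrow> bob_strategy \<Rightarrow> nat \<Rightarrow> nat list" where
  "ahist n S \<sigma> 0 = []"
| "ahist n S \<sigma> (Suc k) = ahist n S \<sigma> k @ [ach n S (ahist n S \<sigma> k), \<sigma> (ahist n S \<sigma> k @ [ach n S (ahist n S \<sigma> k)])]"

lemma hist_ahist: "hist (\<lambda>k. ach n S (ahist n S \<sigma> k)) \<sigma> k = ahist n S \<sigma> k"
  by (induction k) auto

lemma ind_01: "ind v \<in> {0,1}" by (simp add: ind_def)

lemma bob_imp_win: "bob_wins n S \<Longrightarrow> Win n 0 0 S"
proof (rule ccontr)
  assume B: "bob_wins n S" and W: "\<not> Win n 0 0 S"
  from B obtain \<sigma> where leg: "\<forall>h. \<sigma> h \<in> {1,2}"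
    and win: "\<forall>a. (\<forall>k<n. a k \<in> {1,2}) \<longrightarrow> ab_outcome n a \<sigma> \<in> S"
    unfolding bob_wins_def by blast
  define a where "a = (\<lambda>k. ach n S (ahist n S \<sigma> k))"
  have ha: "hist a \<sigma> k = ahist n S \<sigma> k" for k unfolding a_def by (rule hist_ahist)
  have ak: "a k = (if \<forall>\<beta>\<in>{0::nat,1}. \<not> Win (n - Suc k) (cA a k) (cB a \<sigma> k + \<beta>) S then 2 else 1)" for k
  proof -
    have "a k = ach n S (hist a \<sigma> k)" using ha unfolding a_def by simp
    then show ?thesis unfolding ach_def by (simp add: ca_hist cb_hist length_hist)
  qed
  have inv: "k \<le> n \<Longrightarrow> \<not> Win (n - k) (cA a k) (cB a \<sigma> k) S" for k
  proof (induction k)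
    case 0
    then show ?case using W by (simp add: cA_def cB_def)
  next
    case (Suc k)
    have nk: "n - k = Suc (n - Suc k)" using Suc.prems by linarith
    have IH: "\<not> Win (Suc (n - Suc k)) (cA a k) (cB a \<sigma> k) S"
      using Suc.IH Suc.prems nk by simp
    then have ex: "\<exists>\<alpha>\<in>{0::nat,1}. \<forall>\<beta>\<in>{0::nat,1}. \<not> Win (n - Suc k) (cA a k + \<alpha>) (cB a \<sigma> k + \<beta>) S"
      unfolding Win.simps(2) by blast
    have cb: "cB a \<sigma> (Suc k) = cB a \<sigma> k + ind (bob_move a \<sigma> k)" by (rule cB_Suc)
    show ?case
    proof (cases "\<forall>\<beta>\<in>{0::nat,1}. \<not> Win (n - Suc k) (cA a k) (cB a \<sigma> k + \<beta>) S")
      case True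
      then have "a k = 2" using ak[of k] by (metis (no_types, lifting))
      then have "cA a (Suc k) = cA a k" by (simp add: cA_Suc ind_def)
      then show ?thesis using True cb ind_01[of "bob_move a \<sigma> k"]
        by (cases "ind (bob_move a \<sigma> k) = 0") auto
    next
      case False
      then have "a k = 1" using ak[of k] by (metis (no_types, lifting))
      then have ca1: "cA a (Suc k) = cA a k + 1" by (simp add: cA_Suc ind_def)
      from ex obtain \<alpha> where al: "\<alpha> \<in> {0,1}" "\<forall>\<beta>\<in>{0::nat,1}. \<not> Win (n - Suc k) (cA a k + \<alpha>) (cB a \<sigma> k + \<beta>) S"
        by blast
      have "\<alpha> \<noteq> 0" using al False by auto
      then have "\<alpha> = 1" using al(1) by blast
      then show ?thesis using al(2) ca1 cb ind_01[of "bob_move a \<sigma> k"]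
        by (cases "ind (bob_move a \<sigma> k) = 0") auto
    qed
  qed
  have "\<forall>k<n. a k \<in> {1,2}" using ak by simp
  then have "ab_outcome n a \<sigma> \<in> S" using win by blast
  moreover have "\<not> Win 0 (cA a n) (cB a \<sigma> n) S" using inv[of n] by simp
  ultimately show False by (simp add: outcome_eq)
qed

lemma bob_wins_iff: "bob_wins n S \<longleftrightarrow> Win n 0 0 S"
  using bob_imp_win win_imp_bob by blast



lemma L1: "c \<in> {0,1} \<Longrightarrow> (\<forall>d\<le>m. Win k (x + d) (y + c * m) S) \<Longrightarrow> Win (m + k) x y S"
proof (induction m arbitrary: x y)
  case 0
  then show ?case by simp
next
  case (Suc m)
  show ?case unfolding add_Suc Win.simps(2)
  proof
    fix a :: nat assume a: "a \<in> {0,1}"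
    have "\<forall>d\<le>m. Win k (x + a + d) (y + c + c * m) S"
    proof (intro allI impI)
      fix d assume "d \<le> m"
      then have "a + d \<le> Suc m" using a by auto
      then have "Win k (x + (a + d)) (y + c * Suc m) S" using Suc.prems(2) by blast
      then show "Win k (x + a + d) (y + c + c * m) S" by (simp add: add.assoc)
    qed
    then have "Win (m + k) (x + a) (y + c) S" using Suc.IH[OF Suc.prems(1)] by blast
    then show "\<exists>b\<in>{0,1}. Win (m + k) (x + a) (y + b) S" using Suc.prems(1) by blast
  qed
qed

lemma blockB:
  assumes "\<forall>a\<in>{0::nat,1}. \<exists>c\<in>{0::nat,1}. \<forall>d<Suc m. Win k (x + a + d) (y + c * Suc m) S"
  shows "Win (Suc m + k) x y S"
  unfolding add_Suc Win.simps(2)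
proof
  fix a :: nat assume a: "a \<in> {0,1}"
  then obtain c where c: "c \<in> {0,1}" "\<forall>d<Suc m. Win k (x + a + d) (y + c * Suc m) S"
    using assms by blast
  have "\<forall>d\<le>m. Win k (x + a + d) (y + c + c * m) S" using c(2) by (simp add: less_Suc_eq_le add.assoc)
  then have "Win (m + k) (x + a) (y + c) S" using L1[OF c(1)] by blast
  then show "\<exists>b\<in>{0,1}. Win (m + k) (x + a) (y + b) S" using c(1) by blast
qed

lemma L2: "c \<in> {0,1} \<Longrightarrow> Win (m + k) x y S \<Longrightarrow> \<exists>e\<le>m. Win k (x + c * m) (y + e) S"
proof (induction m arbitrary: x y)
  case 0
  then show ?case by simp
next
  case (Suc m)
  from Suc.prems(2) obtain b where b: "b \<in> {0,1}" "Win (m + k) (x + c) (y + b) S"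
    using Suc.prems(1) unfolding add_Suc Win.simps(2) by blast
  then obtain e where e: "e \<le> m" "Win k (x + c + c * m) (y + b + e) S"
    using Suc.IH[OF Suc.prems(1)] by blast
  then have "b + e \<le> Suc m" "Win k (x + c * Suc m) (y + (b + e)) S" using b(1) by (auto simp: add.assoc)
  then show ?case by blast
qed

definition box :: "nat \<Rightarrow> nat \<Rightarrow> nat \<Rightarrow> (nat \<times> nat) set" where
  "box x y k = {x..x+k} \<times> {y..y+k}"

lemma Win_loc: "box x y k \<subseteq> B \<Longrightarrow> Win k x y S = Win k x y (S \<inter> B)"
proof (induction k arbitrary: x y)
  case 0
  then show ?case by (auto simp: box_def)
next
  case (Suc k)
  have "box (x + a) (y + b) k \<subseteq> B" if "a \<in> {0,1}" "b \<in> {0,1}" for a b :: nat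
    using Suc.prems that unfolding box_def by auto
  then show ?case using Suc.IH by simp
qed

lemma pow_sq: "(2::real) ^ j * 2 ^ j = 4 ^ j"
  by (simp add: power_mult_distrib[symmetric])

lemma real_two_pow: "real (Suc (2 ^ j - 1)) = (2::real) ^ j"
proof -
  have "Suc (2 ^ j - 1) = (2::nat) ^ j" by simp
  then show ?thesis by (metis of_nat_numeral of_nat_power)
qed

lemma bobfail:
  assumes p: "0 \<le> p" "p \<le> 1" "1 - p \<le> 1/8" and U: "finite U"
  shows "box x y (2 ^ j - 1) \<subseteq> U \<Longrightarrow> mu p U (\<lambda>S. \<not> Win (2 ^ j - 1) x y S) \<le> (1/8) / 4 ^ j"
proof (induction j arbitrary: x y)
  case 0
  then have "(x, y) \<in> U" by (auto simp: box_def)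
  then show ?case using mu_cell_not[OF U, of "(x,y)" p] p by simp
next
  case (Suc j)
  define k where "k = (2::nat) ^ j - 1"
  define b where "b = (1/8::real) / 4 ^ j"
  have kk: "(2::nat) ^ Suc j - 1 = Suc k + k" unfolding k_def by simp
  define E where "E = (\<lambda>a c S. \<exists>d\<in>{..<Suc k}. \<not> Win k (x + a + d) (y + c * Suc k) S)"
  have boxU: "box x y (Suc k + k) \<subseteq> U" using Suc.prems kk by simp
  have step: "\<exists>a\<in>{0::nat,1}. E a 0 S \<and> E a 1 S" if "\<not> Win (Suc k + k) x y S" for S
  proof (rule ccontr)
    assume "\<not> (\<exists>a\<in>{0::nat,1}. E a 0 S \<and> E a 1 S)"
    then have "\<forall>a\<in>{0::nat,1}. \<exists>c\<in>{0::nat,1}. \<forall>d<Suc k. Win k (x + a + d) (y + c * Suc k) S"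
      unfolding E_def by auto
    then show False using blockB[where m=k and k=k and x=x and y=y and S=S] that by blast
  qed
  have bE: "mu p U (E a c) \<le> 2 ^ j * b" if a: "a \<in> {0,1}" and c: "c \<in> {0,1}" for a c :: nat
  proof -
    have "mu p U (E a c) \<le> (\<Sum>d\<in>{..<Suc k}. mu p U (\<lambda>S. \<not> Win k (x + a + d) (y + c * Suc k) S))"
      unfolding E_def by (rule mu_union) (use p in auto)
    also have "\<dots> \<le> (\<Sum>d\<in>{..<Suc k}. b)"
    proof (rule sum_mono)
      fix d assume "d \<in> {..<Suc k}"
      then have "box (x + a + d) (y + c * Suc k) k \<subseteq> box x y (Suc k + k)"
        using a c unfolding box_def by auto
      then have "box (x + a + d) (y + c * Suc k) (2 ^ j - 1) \<subseteq> U" using boxU unfolding k_def by blast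
      then show "mu p U (\<lambda>S. \<not> Win k (x + a + d) (y + c * Suc k) S) \<le> b"
        using Suc.IH unfolding k_def b_def by blast
    qed
    also have "\<dots> = 2 ^ j * b" using real_two_pow[of j] unfolding k_def by simp
    finally show ?thesis .
  qed
  have locE: "loc (UNIV \<times> {y + c * Suc k .. y + c * Suc k + k}) (E a c)" for a c
    unfolding loc_def E_def
  proof (intro allI)
    fix S
    have "Win k (x + a + d) (y + c * Suc k) S = Win k (x + a + d) (y + c * Suc k) (S \<inter> (UNIV \<times> {y + c * Suc k .. y + c * Suc k + k}))" for d
      by (rule Win_loc) (auto simp: box_def)
    then show "(\<exists>d\<in>{..<Suc k}. \<not> Win k (x + a + d) (y + c * Suc k) S) =
      (\<exists>d\<in>{..<Suc k}. \<not> Win k (x + a + d) (y + c * Suc k) (S \<inter> (UNIV \<times> {y + c * Suc k .. y + c * Suc k + k})))"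
      by simp
  qed
  have disj: "(UNIV \<times> {y + 0 * Suc k .. y + 0 * Suc k + k}) \<inter> (UNIV \<times> {y + 1 * Suc k .. y + 1 * Suc k + k}) = {}"
    by auto
  have "mu p U (\<lambda>S. \<not> Win (2 ^ Suc j - 1) x y S) \<le> mu p U (\<lambda>S. \<exists>a\<in>{0::nat,1}. E a 0 S \<and> E a 1 S)"
    by (rule mu_mono) (use p step kk in auto)
  also have "\<dots> \<le> (\<Sum>a\<in>{0::nat,1}. mu p U (\<lambda>S. E a 0 S \<and> E a 1 S))"
    by (rule mu_union) (use p in auto)
  also have "\<dots> = (\<Sum>a\<in>{0::nat,1}. mu p U (E a 0) * mu p U (E a 1))"
    by (rule sum.cong[OF refl], rule mu_indep[OF U locE locE disj])
  also have "\<dots> \<le> (\<Sum>a\<in>{0::nat,1}. (2 ^ j * b) * (2 ^ j * b))"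
  proof (rule sum_mono)
    fix a :: nat assume a: "a \<in> {0,1}"
    have b0: "0 \<le> 2 ^ j * b" unfolding b_def by simp
    show "mu p U (E a 0) * mu p U (E a 1) \<le> (2 ^ j * b) * (2 ^ j * b)"
      by (rule mult_mono[OF bE bE]) (use a b0 mu_nonneg[OF p(1) p(2)] in auto)
  qed
  also have "\<dots> = 2 * (2 ^ j * 2 ^ j) * b * b" by simp
  also have "\<dots> = (1/8) / 4 ^ Suc j" unfolding pow_sq b_def by (simp add: field_simps)
  finally show ?case .
qed

lemma bobwin:
  assumes p: "0 \<le> p" "p \<le> 1" "p \<le> 1/16" and U: "finite U"
  shows "box x y (2 ^ j - 1) \<subseteq> U \<Longrightarrow> mu p U (\<lambda>S. Win (2 ^ j - 1) x y S) \<le> (1/16) / 4 ^ j"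
proof (induction j arbitrary: x y)
  case 0
  then have "(x, y) \<in> U" by (auto simp: box_def)
  then show ?case using mu_cell[OF U, of "(x,y)" p] p by simp
next
  case (Suc j)
  define k where "k = (2::nat) ^ j - 1"
  define b where "b = (1/16::real) / 4 ^ j"
  have kk: "(2::nat) ^ Suc j - 1 = Suc k + k" unfolding k_def by simp
  define F where "F = (\<lambda>c S. \<exists>e\<in>{..Suc k}. Win k (x + c * Suc k) (y + e) S)"
  have boxU: "box x y (Suc k + k) \<subseteq> U" using Suc.prems kk by simp
  have step: "F 0 S \<and> F 1 S" if "Win (Suc k + k) x y S" for S
    using L2[of 0 "Suc k" k x y S] L2[of 1 "Suc k" k x y S] that unfolding F_def by auto
  have bF: "mu p U (F c) \<le> (2 ^ j + 1) * b" if c: "c \<in> {0,1}" for c :: nat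
  proof -
    have "mu p U (F c) \<le> (\<Sum>e\<in>{..Suc k}. mu p U (\<lambda>S. Win k (x + c * Suc k) (y + e) S))"
      unfolding F_def by (rule mu_union) (use p in auto)
    also have "\<dots> \<le> (\<Sum>e\<in>{..Suc k}. b)"
    proof (rule sum_mono)
      fix e assume "e \<in> {..Suc k}"
      then have "box (x + c * Suc k) (y + e) k \<subseteq> box x y (Suc k + k)"
        using c unfolding box_def by auto
      then have "box (x + c * Suc k) (y + e) (2 ^ j - 1) \<subseteq> U" using boxU unfolding k_def by blast
      then show "mu p U (\<lambda>S. Win k (x + c * Suc k) (y + e) S) \<le> b"
        using Suc.IH unfolding k_def b_def by blast
    qed
    also have "\<dots> = (2 ^ j + 1) * b" using real_two_pow[of j] unfolding k_def by simp
    finally show ?thesis .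
  qed
  have locF: "loc ({x + c * Suc k .. x + c * Suc k + k} \<times> UNIV) (F c)" for c
    unfolding loc_def F_def
  proof (intro allI)
    fix S
    have "Win k (x + c * Suc k) (y + e) S = Win k (x + c * Suc k) (y + e) (S \<inter> ({x + c * Suc k .. x + c * Suc k + k} \<times> UNIV))" for e
      by (rule Win_loc) (auto simp: box_def)
    then show "(\<exists>e\<in>{..Suc k}. Win k (x + c * Suc k) (y + e) S) =
      (\<exists>e\<in>{..Suc k}. Win k (x + c * Suc k) (y + e) (S \<inter> ({x + c * Suc k .. x + c * Suc k + k} \<times> UNIV)))"
      by simp
  qed
  have disj: "({x + 0 * Suc k .. x + 0 * Suc k + k} \<times> UNIV) \<inter> ({x + 1 * Suc k .. x + 1 * Suc k + k} \<times> UNIV) = {}"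
    by auto
  have b0: "0 \<le> b" unfolding b_def by simp
  have "mu p U (\<lambda>S. Win (2 ^ Suc j - 1) x y S) \<le> mu p U (\<lambda>S. F 0 S \<and> F 1 S)"
    by (rule mu_mono) (use p step kk in auto)
  also have "\<dots> = mu p U (F 0) * mu p U (F 1)"
    by (rule mu_indep[OF U locF locF disj])
  also have "\<dots> \<le> ((2 ^ j + 1) * b) * ((2 ^ j + 1) * b)"
  proof -
    have "0 \<le> (2 ^ j + 1) * b" using b0 by simp
    then show ?thesis by (intro mult_mono[OF bF[of 0] bF[of 1]]) (use mu_nonneg[OF p(1) p(2)] in auto)
  qed
  also have "\<dots> \<le> (2 * 2 ^ j * b) * (2 * 2 ^ j * b)"
  proof -
    have "(1::real) \<le> 2 ^ j" by simp
    then have h1: "0 \<le> (2 ^ j + 1) * b" and h2: "(2 ^ j + 1) * b \<le> 2 * 2 ^ j * b"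
      using b0 by (auto intro: mult_right_mono)
    have h3: "0 \<le> 2 * 2 ^ j * b" using b0 by simp
    show ?thesis by (rule mult_mono[OF h2 h2 h3 h1])
  qed
  also have "\<dots> = 4 * (2 ^ j * 2 ^ j) * b * b" by simp
  also have "\<dots> = (1/16) / 4 ^ Suc j" unfolding pow_sq b_def by (simp add: field_simps)
  finally show ?case .
qed



lemma exJ: "\<exists>J. (2::nat) ^ J \<le> Suc n \<and> Suc n < 2 * 2 ^ J"
proof (induction n)
  case 0
  then show ?case by (rule exI[of _ 0]) simp
next
  case (Suc n)
  then obtain J where J: "(2::nat) ^ J \<le> Suc n" "Suc n < 2 * 2 ^ J" by blast
  show ?case
  proof (cases "Suc (Suc n) < 2 * 2 ^ J")
    case True
    then show ?thesis using J by (intro exI[of _ J]) simp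
  next
    case False
    then have "Suc (Suc n) = 2 * 2 ^ J" using J by simp
    then show ?thesis by (intro exI[of _ "Suc J"]) simp
  qed
qed

lemma fin_out: "finite (outcomes n)" unfolding outcomes_def by simp

lemma P_ab_mu: "P_ab n p = mu p (outcomes n) (\<lambda>S. Win n 0 0 S)"
  unfolding P_ab_def mu_def wt_def bob_wins_iff by simp

lemma arith_aux:
  fixes R A N c :: real
  assumes "0 \<le> R" "R \<le> A" "0 < N" "N \<le> 2 * A" "0 \<le> c"
  shows "R * (c / (A * A)) \<le> 2 * c / N"
proof -
  have A: "0 < A" using assms by linarith
  have "R * (c / (A * A)) \<le> A * (c / (A * A))"
    using assms A by (intro mult_right_mono) auto
  also have "\<dots> = c / A" using A by simp
  also have "\<dots> = (2 * c) / (2 * A)" by simp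
  also have "\<dots> \<le> 2 * c / N"
    by (rule divide_left_mono) (use assms A in auto)
  finally show ?thesis .
qed

lemma main_bounds:
  assumes p: "0 \<le> p" "p \<le> 1"
  shows "p \<le> 1/16 \<Longrightarrow> P_ab n p \<le> (1/8) / (real n + 1)"
    and "1 - p \<le> 1/8 \<Longrightarrow> 1 - P_ab n p \<le> (1/4) / (real n + 1)"
proof -
  obtain J where J: "(2::nat) ^ J \<le> Suc n" "Suc n < 2 * 2 ^ J" using exJ by blast
  define k where "k = (2::nat) ^ J - 1"
  define r where "r = n - k"
  have nrk: "n = r + k" unfolding r_def k_def using J by simp
  have r1: "real (card {..r}) \<le> 2 ^ J"
  proof -
    have "Suc r \<le> 2 ^ J" unfolding r_def k_def using J by simp
    then have "real (Suc r) \<le> real ((2::nat) ^ J)" by linarith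
    then show ?thesis by simp
  qed
  have N: "real n + 1 \<le> 2 * 2 ^ J"
  proof -
    have "real (Suc n) \<le> real (2 * (2::nat) ^ J)" using J by linarith
    then show ?thesis by simp
  qed
  have fo: "finite (outcomes n)" by (rule fin_out)
  have boxd: "box d 0 k \<subseteq> outcomes n" "box 0 d k \<subseteq> outcomes n" if "d \<le> r" for d
    using that nrk unfolding box_def outcomes_def by auto
  have q4: "(4::real) ^ J = 2 ^ J * 2 ^ J" using pow_sq[of J] by simp
  show "P_ab n p \<le> (1/8) / (real n + 1)" if p16: "p \<le> 1/16"
  proof -
    have "P_ab n p \<le> mu p (outcomes n) (\<lambda>S. \<exists>e\<in>{..r}. Win k 0 e S)"
      unfolding P_ab_mu
    proof (rule mu_mono[OF p])
      fix S assume "Win n 0 0 S"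
      then have "Win (r + k) 0 0 S" using nrk by simp
      then show "\<exists>e\<in>{..r}. Win k 0 e S" using L2[of 0 r k 0 0 S] by auto
    qed
    also have "\<dots> \<le> (\<Sum>e\<in>{..r}. mu p (outcomes n) (\<lambda>S. Win k 0 e S))"
      by (rule mu_union[OF p]) simp
    also have "\<dots> \<le> (\<Sum>e\<in>{..r}. (1/16) / 4 ^ J)"
    proof (rule sum_mono)
      fix e assume "e \<in> {..r}"
      then show "mu p (outcomes n) (\<lambda>S. Win k 0 e S) \<le> (1/16) / 4 ^ J"
        using bobwin[OF p p16 fo, of 0 e J] boxd(2)[of e] unfolding k_def by simp
    qed
    also have "\<dots> = real (card {..r}) * ((1/16) / (2 ^ J * 2 ^ J))" using q4 by simp
    also have "\<dots> \<le> 2 * (1/16) / (real n + 1)"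
      by (rule arith_aux) (use r1 N in auto)
    finally show ?thesis by simp
  qed
  show "1 - P_ab n p \<le> (1/4) / (real n + 1)" if p8: "1 - p \<le> 1/8"
  proof -
    have "1 - P_ab n p = mu p (outcomes n) (\<lambda>S. \<not> Win n 0 0 S)"
      unfolding P_ab_mu using mu_compl[OF fo] by simp
    also have "\<dots> \<le> mu p (outcomes n) (\<lambda>S. \<exists>d\<in>{..r}. \<not> Win k d 0 S)"
    proof (rule mu_mono[OF p])
      fix S assume nw: "\<not> Win n 0 0 S"
      show "\<exists>d\<in>{..r}. \<not> Win k d 0 S"
      proof (rule ccontr)
        assume "\<not> (\<exists>d\<in>{..r}. \<not> Win k d 0 S)"
        then have "\<forall>d\<le>r. Win k (0 + d) (0 + 0 * r) S" by auto
        then have "Win (r + k) 0 0 S" using L1[of 0 r k 0 0 S] by simp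
        then show False using nw nrk by simp
      qed
    qed
    also have "\<dots> \<le> (\<Sum>d\<in>{..r}. mu p (outcomes n) (\<lambda>S. \<not> Win k d 0 S))"
      by (rule mu_union[OF p]) simp
    also have "\<dots> \<le> (\<Sum>d\<in>{..r}. (1/8) / 4 ^ J)"
    proof (rule sum_mono)
      fix d assume "d \<in> {..r}"
      then show "mu p (outcomes n) (\<lambda>S. \<not> Win k d 0 S) \<le> (1/8) / 4 ^ J"
        using bobfail[OF p p8 fo, of d 0 J] boxd(1)[of d] unfolding k_def by simp
    qed
    also have "\<dots> = real (card {..r}) * ((1/8) / (2 ^ J * 2 ^ J))" using q4 by simp
    also have "\<dots> \<le> 2 * (1/8) / (real n + 1)"
      by (rule arith_aux) (use r1 N in auto)
    finally show ?thesis by simp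
  qed
qed

lemma lim_aux:
  fixes f :: "nat \<Rightarrow> real"
  assumes "\<And>n. 0 \<le> f n" "\<And>n. f n \<le> C / (real n + 1)"
  shows "f \<longlonglongrightarrow> 0"
proof (rule tendsto_sandwich[of "\<lambda>_. 0" f sequentially "\<lambda>n. C * inverse (real (Suc n))"])
  show "\<forall>\<^sub>F n in sequentially. 0 \<le> f n" using assms by simp
  show "\<forall>\<^sub>F n in sequentially. f n \<le> C * inverse (real (Suc n))"
    using assms(2) by (simp add: field_simps)
  show "(\<lambda>n. 0) \<longlonglongrightarrow> (0::real)" by simp
  show "(\<lambda>n. C * inverse (real (Suc n))) \<longlonglongrightarrow> 0"
    using tendsto_mult[OF tendsto_const LIMSEQ_inverse_real_of_nat, of C] by simp
qed

theorem proposition4: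
  fixes p :: real
  assumes "0 \<le> p" and "p \<le> 1"
  shows "(p < 1/64 \<longrightarrow> (\<lambda>n. P_ab n p) \<longlonglongrightarrow> 0) \<and>
         (p > 15/16 \<longrightarrow> (\<lambda>n. P_ab n p) \<longlonglongrightarrow> 1)"
proof (intro conjI impI)
  assume "p < 1/64"
  then have p16: "p \<le> 1/16" by simp
  have nn: "0 \<le> P_ab n p" for n unfolding P_ab_mu by (rule mu_nonneg[OF assms])
  show "(\<lambda>n. P_ab n p) \<longlonglongrightarrow> 0"
    by (rule lim_aux[OF nn main_bounds(1)[OF assms p16]])
next
  assume "p > 15/16"
  then have p8: "1 - p \<le> 1/8" by simp
  have nn: "0 \<le> 1 - P_ab n p" for n
  proof -
    have "1 - P_ab n p = mu p (outcomes n) (\<lambda>S. \<not> Win n 0 0 S)"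
      unfolding P_ab_mu using mu_compl[OF fin_out] by simp
    then show ?thesis using mu_nonneg[OF assms] by simp
  qed
  have "(\<lambda>n. 1 - P_ab n p) \<longlonglongrightarrow> 0"
    by (rule lim_aux[OF nn main_bounds(2)[OF assms p8]])
  from tendsto_diff[OF tendsto_const this, of 1]
  show "(\<lambda>n. P_ab n p) \<longlonglongrightarrow> 1" by simp
qed


end
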